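(* Let $X$ and $\Lambda$ be nonempty sets, $f: X\to\mathbb{R}$ a function and $(f_\lambda)_{\lambda\in\Lambda}$ a family of real-valued functions on $X$ such that the family $(f_\lambda-f)_{\lambda\in\Lambda}$ is infsup-convex on $X$. Assume that $(f_\lambda(x))_{\lambda\in\Lambda}\in\ell^\infty(\Lambda)$ for every $x\in X$, and that $f(x)\le\sup_{\lambda\in\Lambda}f_\lambda(x)$ for every $x\in X$. Then there exists $\Phi\in\Delta_\Lambda$ such that $f(x)\le\Phi((f_\lambda(x))_{\lambda\in\Lambda})$ for every $x\in X$.
   Context: For a nonempty set $\Lambda$, $\ell^\infty(\Lambda)$ is the real Banach space of bounded real-valued functions on $\Lambda$ (sup-norm), $\ell^\infty(\Lambda)^*$ its topological dual, and $\Delta_\Lambda:=\{\Phi\in\ell^\infty(\Lambda)^*:\ \Phi(\varphi)\le\sup_{\lambda\in\Lambda}\varphi(\lambda)\ \forall\varphi\in\ell^\infty(\Lambda)\}$. Let $\Delta_m:=\{(t_1,\dots,t_m)\in\mathbb{R}^m: t_j\ge0,\ \sum_j t_j=1\}$. A family $(g_\lambda)_{\lambda\in\Lambda}$ of real-valued functions on a nonempty set $X$ is infsup-convex on $X$ if for all $m\ge1$, $\mathbf{t}\in\Delta_m$ and $x_1,\dots,x_m\in X$: $\inf_{x\in X}\sup_{\lambda\in\Lambda}g_\lambda(x)\le\sup_{\lambda\in\Lambda}\sum_{j=1}^m t_j g_\lambda(x_j)$. *)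

theory Defs
  imports "HOL-Analysis.Analysis"
begin

text \<open>The nonempty sets X and Lambda are modelled by the (nonempty) types 'x and 'l.\<close>

definition linf :: "('l \<Rightarrow> real) set" where
  "linf = {\<phi>. bounded (range \<phi>)}"

text \<open>Topological dual of ell-infinity: linear functionals on linf that are bounded
  w.r.t. the sup-norm (only their values on linf matter).\<close>
definition linf_dual :: "(('l \<Rightarrow> real) \<Rightarrow> real) set" where
  "linf_dual = {\<Phi>.
     (\<forall>\<phi>\<in>linf. \<forall>\<psi>\<in>linf. \<forall>a b. \<Phi> (\<lambda>l. a * \<phi> l + b * \<psi> l) = a * \<Phi> \<phi> + b * \<Phi> \<psi>) \<and>
     (\<exists>C. \<forall>\<phi>\<in>linf. \<bar>\<Phi> \<phi>\<bar> \<le> C * (SUP l. \<bar>\<phi> l\<bar>))}"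

definition Delta_L :: "(('l \<Rightarrow> real) \<Rightarrow> real) set" where
  "Delta_L = {\<Phi>\<in>linf_dual. \<forall>\<phi>\<in>linf. \<Phi> \<phi> \<le> (SUP l. \<phi> l)}"

definition std_simplex :: "nat \<Rightarrow> (nat \<Rightarrow> real) set" where
  "std_simplex m = {t. (\<forall>j<m. 0 \<le> t j) \<and> (\<Sum>j<m. t j) = 1}"

text \<open>Infsup-convexity of a family g (g l x = g_lambda(x)); inf/sup taken in the
  extended reals so that infinite values are handled as in the paper.\<close>
definition infsup_convex :: "('l \<Rightarrow> 'x \<Rightarrow> real) \<Rightarrow> bool" where
  "infsup_convex g \<longleftrightarrow>
     (\<forall>m\<ge>1. \<forall>t\<in>std_simplex m. \<forall>xs :: nat \<Rightarrow> 'x.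
        (INF x. SUP l. ereal (g l x)) \<le> (SUP l. ereal (\<Sum>j<m. t j * g l (xs j))))"

end

theory Submission imports Defs begin

lemma linf_iff: "\<phi> \<in> linf \<longleftrightarrow> (\<exists>B. \<forall>l. \<bar>\<phi> l\<bar> \<le> B)"
  unfolding linf_def bounded_iff by auto

lemma linf_add: "\<phi>\<in>linf \<Longrightarrow> \<psi>\<in>linf \<Longrightarrow> (\<lambda>l. \<phi> l + \<psi> l) \<in> linf"
proof -
  assume "\<phi>\<in>linf" "\<psi>\<in>linf"
  then obtain A B where a: "\<forall>l. \<bar>\<phi> l\<bar> \<le> A" and b: "\<forall>l. \<bar>\<psi> l\<bar> \<le> B" by (auto simp: linf_iff)
  have "\<bar>\<phi> l + \<psi> l\<bar> \<le> A + B" for l using a[rule_format, of l] b[rule_format, of l] by linarith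
  then have "\<forall>l. \<bar>\<phi> l + \<psi> l\<bar> \<le> A + B" by blast
  then show ?thesis by (auto simp: linf_iff)
qed

lemma linf_smul: "\<phi>\<in>linf \<Longrightarrow> (\<lambda>l. c * \<phi> l) \<in> linf"
proof -
  assume "\<phi>\<in>linf"
  then obtain A where A: "\<forall>l. \<bar>\<phi> l\<bar> \<le> A" by (auto simp: linf_iff)
  have "\<forall>l. \<bar>c * \<phi> l\<bar> \<le> \<bar>c\<bar> * A" using A by (simp add: abs_mult mult_left_mono)
  then show ?thesis by (auto simp: linf_iff)
qed

lemma linf_neg: "\<phi>\<in>linf \<Longrightarrow> (\<lambda>l. - \<phi> l) \<in> linf"
  using linf_smul[of \<phi> "-1"] by simp

lemma linf_const: "(\<lambda>l. c) \<in> linf"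
  by (auto simp: linf_iff)

definition sublin :: "(('l \<Rightarrow> real) \<Rightarrow> real) \<Rightarrow> bool" where
  "sublin q \<longleftrightarrow> (\<forall>\<phi>\<in>linf. \<forall>\<psi>\<in>linf. q (\<lambda>l. \<phi> l + \<psi> l) \<le> q \<phi> + q \<psi>) \<and>
     (\<forall>\<phi>\<in>linf. \<forall>c\<ge>0. q (\<lambda>l. c * \<phi> l) = c * q \<phi>)"

lemma sublin_add: "sublin q \<Longrightarrow> \<phi>\<in>linf \<Longrightarrow> \<psi>\<in>linf \<Longrightarrow> q (\<lambda>l. \<phi> l + \<psi> l) \<le> q \<phi> + q \<psi>"
  unfolding sublin_def by blast

lemma sublin_smul: "sublin q \<Longrightarrow> \<phi>\<in>linf \<Longrightarrow> 0 \<le> c \<Longrightarrow> q (\<lambda>l. c * \<phi> l) = c * q \<phi>"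
  unfolding sublin_def by blast

lemma sublin_0: "sublin q \<Longrightarrow> q (\<lambda>l. 0) = 0"
  using sublin_smul[of q "\<lambda>l. 0" 0] linf_const[of 0] by simp

lemma sublin_neg: assumes "sublin q" "\<phi>\<in>linf" shows "0 \<le> q \<phi> + q (\<lambda>l. - \<phi> l)"
proof -
  have "q (\<lambda>l. \<phi> l + - \<phi> l) \<le> q \<phi> + q (\<lambda>l. - \<phi> l)"
    by (rule sublin_add[OF assms(1,2) linf_neg[OF assms(2)]])
  moreover have "(\<lambda>l. \<phi> l + - \<phi> l) = (\<lambda>l. 0)" by simp
  ultimately show ?thesis using sublin_0[OF assms(1)] by simp
qed

lemma sublin_cong: assumes "sublin q" "\<And>\<phi>. \<phi>\<in>linf \<Longrightarrow> q' \<phi> = q \<phi>" shows "sublin q'"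
  using assms unfolding sublin_def by (simp add: linf_add linf_smul)


lemma inf_bdd:
  assumes ne: "D \<noteq> {}" and sl: "\<forall>q\<in>D. sublin q"
    and tot: "\<forall>q1\<in>D. \<forall>q2\<in>D. (\<forall>\<phi>\<in>linf. q1 \<phi> \<le> q2 \<phi>) \<or> (\<forall>\<phi>\<in>linf. q2 \<phi> \<le> q1 \<phi>)"
    and phi: "\<phi> \<in> linf"
  shows "bdd_below ((\<lambda>q. q \<phi>) ` D)"
proof -
  obtain q0 where q0: "q0 \<in> D" using ne by blast
  have "min (q0 \<phi>) (- q0 (\<lambda>l. - \<phi> l)) \<le> q \<phi>" if q: "q \<in> D" for q
  proof (cases "\<forall>\<phi>\<in>linf. q \<phi> \<le> q0 \<phi>")
    case True
    then have "q (\<lambda>l. - \<phi> l) \<le> q0 (\<lambda>l. - \<phi> l)" using linf_neg[OF phi] by blast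
    moreover have "0 \<le> q \<phi> + q (\<lambda>l. - \<phi> l)" using sublin_neg sl q phi by blast
    ultimately show ?thesis by linarith
  next
    case False
    then have "q0 \<phi> \<le> q \<phi>" using tot q q0 phi by blast
    then show ?thesis by linarith
  qed
  then show ?thesis by (intro bdd_belowI2) 
qed

lemma inf_sublin:
  assumes ne: "D \<noteq> {}" and sl: "\<forall>q\<in>D. sublin q"
    and tot: "\<forall>q1\<in>D. \<forall>q2\<in>D. (\<forall>\<phi>\<in>linf. q1 \<phi> \<le> q2 \<phi>) \<or> (\<forall>\<phi>\<in>linf. q2 \<phi> \<le> q1 \<phi>)"
  shows "sublin (\<lambda>\<phi>. INF q\<in>D. q \<phi>)"
  unfolding sublin_def
proof (intro conjI ballI allI impI)
  note bdd = inf_bdd[OF ne sl tot]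
  fix \<phi> \<psi> :: "'a \<Rightarrow> real" assume phi: "\<phi> \<in> linf" and psi: "\<psi> \<in> linf"
  let ?s = "\<lambda>l. \<phi> l + \<psi> l"
  have s: "?s \<in> linf" using linf_add[OF phi psi] .
  have key: "(INF q\<in>D. q ?s) \<le> q1 \<phi> + q2 \<psi>" if q1: "q1 \<in> D" and q2: "q2 \<in> D" for q1 q2
  proof (cases "\<forall>\<phi>\<in>linf. q1 \<phi> \<le> q2 \<phi>")
    case True
    have "(INF q\<in>D. q ?s) \<le> q1 ?s" by (rule cINF_lower[OF bdd[OF s] q1])
    also have "\<dots> \<le> q1 \<phi> + q1 \<psi>" using sublin_add sl q1 phi psi by blast
    also have "\<dots> \<le> q1 \<phi> + q2 \<psi>" using True psi by auto
    finally show ?thesis .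
  next
    case False
    then have le: "\<forall>\<phi>\<in>linf. q2 \<phi> \<le> q1 \<phi>" using tot q1 q2 by blast
    have "(INF q\<in>D. q ?s) \<le> q2 ?s" by (rule cINF_lower[OF bdd[OF s] q2])
    also have "\<dots> \<le> q2 \<phi> + q2 \<psi>" using sublin_add sl q2 phi psi by blast
    also have "\<dots> \<le> q1 \<phi> + q2 \<psi>" using le phi by auto
    finally show ?thesis .
  qed
  have "(INF q\<in>D. q ?s) - q2 \<psi> \<le> (INF q\<in>D. q \<phi>)" if q2: "q2 \<in> D" for q2
    using key q2 by (intro cINF_greatest[OF ne]) (simp add: algebra_simps)
  then have "(INF q\<in>D. q ?s) - (INF q\<in>D. q \<phi>) \<le> (INF q\<in>D. q \<psi>)"
    by (intro cINF_greatest[OF ne]) (simp add: algebra_simps)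
  then show "(INF q\<in>D. q ?s) \<le> (INF q\<in>D. q \<phi>) + (INF q\<in>D. q \<psi>)" by simp
next
  note bdd = inf_bdd[OF ne sl tot]
  fix \<phi> :: "'a \<Rightarrow> real" and c :: real assume phi: "\<phi> \<in> linf" and c: "0 \<le> c"
  let ?s = "\<lambda>l. c * \<phi> l"
  have s: "?s \<in> linf" using linf_smul[OF phi] .
  show "(INF q\<in>D. q ?s) = c * (INF q\<in>D. q \<phi>)"
  proof (cases "c = 0")
    case True
    have "\<forall>q\<in>D. q ?s = 0" using True sublin_0 sl by auto
    then have "(INF q\<in>D. q ?s) = (INF q\<in>D. (0::real))" by (intro INF_cong) auto
    then show ?thesis using True ne by simp
  next
    case False
    then have cp: "0 < c" using c by simp
    have eq: "q ?s = c * q \<phi>" if "q \<in> D" for q using sublin_smul sl that phi c by blast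
    have "(INF q\<in>D. q ?s) / c \<le> (INF q\<in>D. q \<phi>)"
    proof (intro cINF_greatest[OF ne])
      fix q assume q: "q \<in> D"
      have "(INF q\<in>D. q ?s) \<le> q ?s" by (rule cINF_lower[OF bdd[OF s] q])
      then show "(INF q\<in>D. q ?s) / c \<le> q \<phi>" using eq[OF q] cp by (simp add: divide_le_eq mult.commute)
    qed
    moreover have "c * (INF q\<in>D. q \<phi>) \<le> (INF q\<in>D. q ?s)"
    proof (intro cINF_greatest[OF ne])
      fix q assume q: "q \<in> D"
      have "(INF q\<in>D. q \<phi>) \<le> q \<phi>" by (rule cINF_lower[OF bdd[OF phi] q])
      then show "c * (INF q\<in>D. q \<phi>) \<le> q ?s" using eq[OF q] cp by simp
    qed
    ultimately show ?thesis using cp by (simp add: divide_le_eq mult.commute)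
  qed
qed


lemma min_linear:
  assumes sq: "sublin q"
    and minimal: "\<And>q'. sublin q' \<Longrightarrow> (\<forall>\<phi>\<in>linf. q' \<phi> \<le> q \<phi>) \<Longrightarrow> (\<forall>\<phi>\<in>linf. q' \<phi> = q \<phi>)"
    and y: "y \<in> linf"
  shows "q (\<lambda>l. - y l) = - q y"
proof -
  define T where "T x t = q (\<lambda>l. x l + t * y l) - t * q y" for x :: "'a \<Rightarrow> real" and t :: real
  define qy where "qy x = (INF t\<in>{0..}. T x t)" for x
  have ne: "{0::real..} \<noteq> {}" by auto
  have lin: "(\<lambda>l. x l + t * y l) \<in> linf" if "x \<in> linf" for x t
    using linf_add[OF that linf_smul[OF y]] .
  have bdd: "bdd_below (T x ` {0..})" if x: "x \<in> linf" for x
  proof (intro bdd_belowI2)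
    fix t :: real assume t: "t \<in> {0..}"
    have "q (\<lambda>l. (x l + t * y l) + - x l) \<le> q (\<lambda>l. x l + t * y l) + q (\<lambda>l. - x l)"
      by (rule sublin_add[OF sq lin[OF x] linf_neg[OF x]])
    moreover have "(\<lambda>l. (x l + t * y l) + - x l) = (\<lambda>l. t * y l)" by simp
    moreover have "q (\<lambda>l. t * y l) = t * q y" using sublin_smul[OF sq y] t by simp
    ultimately show "- q (\<lambda>l. - x l) \<le> T x t" unfolding T_def by simp
  qed
  have T0: "T x 0 = q x" for x unfolding T_def by simp
  have le: "qy x \<le> T x t" if "x \<in> linf" "0 \<le> t" for x t
    unfolding qy_def using cINF_lower[OF bdd[OF that(1)], of t] that by simp
  have sqy: "sublin qy"
    unfolding sublin_def
  proof (intro conjI ballI allI impI)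
    fix x1 x2 :: "'a \<Rightarrow> real" assume x1: "x1 \<in> linf" and x2: "x2 \<in> linf"
    have x12: "(\<lambda>l. x1 l + x2 l) \<in> linf" using linf_add[OF x1 x2] .
    have key: "qy (\<lambda>l. x1 l + x2 l) \<le> T x1 t1 + T x2 t2" if t1: "0 \<le> t1" and t2: "0 \<le> t2" for t1 t2
    proof -
      have "qy (\<lambda>l. x1 l + x2 l) \<le> T (\<lambda>l. x1 l + x2 l) (t1 + t2)" using le[OF x12] t1 t2 by simp
      also have "(\<lambda>l. (x1 l + x2 l) + (t1 + t2) * y l) = (\<lambda>l. (x1 l + t1 * y l) + (x2 l + t2 * y l))"
        by (simp add: algebra_simps)
      then have "T (\<lambda>l. x1 l + x2 l) (t1 + t2) \<le> T x1 t1 + T x2 t2"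
        unfolding T_def using sublin_add[OF sq lin[OF x1] lin[OF x2], of t1 t2]
        by (simp add: algebra_simps)
      finally show ?thesis .
    qed
    have "qy (\<lambda>l. x1 l + x2 l) - T x2 t2 \<le> qy x1" if t2: "0 \<le> t2" for t2
      unfolding qy_def[of x1] using key t2 by (intro cINF_greatest[OF ne]) (simp add: algebra_simps)
    then have "qy (\<lambda>l. x1 l + x2 l) - qy x1 \<le> qy x2"
      unfolding qy_def[of x2] by (intro cINF_greatest[OF ne]) (simp add: algebra_simps)
    then show "qy (\<lambda>l. x1 l + x2 l) \<le> qy x1 + qy x2" by simp
  next
    fix x :: "'a \<Rightarrow> real" and c :: real assume x: "x \<in> linf" and c: "0 \<le> c"
    have xc: "(\<lambda>l. c * x l) \<in> linf" using linf_smul[OF x] .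
    show "qy (\<lambda>l. c * x l) = c * qy x"
    proof (cases "c = 0")
      case True
      have "T (\<lambda>l. c * x l) t = 0" if "t \<in> {0..}" for t
        using True sublin_smul[OF sq y, of t] that unfolding T_def by simp
      then have "qy (\<lambda>l. c * x l) = (INF t\<in>{0::real..}. 0)" unfolding qy_def
        by (intro INF_cong) auto
      then show ?thesis using True by simp
    next
      case False
      then have cp: "0 < c" using c by simp
      have scal: "T (\<lambda>l. c * x l) t = c * T x (t / c)" for t
      proof -
        have "(\<lambda>l. c * x l + t * y l) = (\<lambda>l. c * (x l + (t / c) * y l))"
          using cp by (simp add: algebra_simps)
        then show ?thesis unfolding T_def
          using sublin_smul[OF sq lin[OF x], of c "t / c"] c cp by (simp add: algebra_simps)
      qed
      have "qy (\<lambda>l. c * x l) / c \<le> qy x"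
        unfolding qy_def[of x]
      proof (intro cINF_greatest[OF ne])
        fix s :: real assume s: "s \<in> {0..}"
        have "qy (\<lambda>l. c * x l) \<le> T (\<lambda>l. c * x l) (c * s)" using le[OF xc] s cp by simp
        also have "\<dots> = c * T x s" using scal[of "c * s"] cp by simp
        finally show "qy (\<lambda>l. c * x l) / c \<le> T x s" using cp by (simp add: divide_le_eq mult.commute)
      qed
      moreover have "c * qy x \<le> qy (\<lambda>l. c * x l)"
        unfolding qy_def[of "\<lambda>l. c * x l"]
      proof (intro cINF_greatest[OF ne])
        fix t :: real assume t: "t \<in> {0..}"
        have "qy x \<le> T x (t / c)" using le[OF x] t cp by simp
        then show "c * qy x \<le> T (\<lambda>l. c * x l) t" using scal[of t] cp by simp
      qed
      ultimately show ?thesis using cp by (simp add: divide_le_eq mult.commute)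
    qed
  qed
  have "\<forall>\<phi>\<in>linf. qy \<phi> \<le> q \<phi>" using le T0 by (metis order_refl)
  then have eq: "\<forall>\<phi>\<in>linf. qy \<phi> = q \<phi>" using minimal[OF sqy] by blast
  have "q (\<lambda>l. - y l) = qy (\<lambda>l. - y l)" using eq linf_neg[OF y] by simp
  also have "\<dots> \<le> T (\<lambda>l. - y l) 1" using le[OF linf_neg[OF y]] by simp
  also have "\<dots> = - q y" unfolding T_def using sublin_0[OF sq] by simp
  finally show ?thesis using sublin_neg[OF sq y] by linarith
qed


lemma exists_linear_below:
  assumes sP: "sublin P"
  shows "\<exists>\<Phi>. (\<forall>\<phi>\<in>linf. \<Phi> \<phi> \<le> P \<phi>) \<and>
    (\<forall>\<phi>\<in>linf. \<forall>\<psi>\<in>linf. \<Phi> (\<lambda>l. \<phi> l + \<psi> l) = \<Phi> \<phi> + \<Phi> \<psi>) \<and>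
    (\<forall>\<phi>\<in>linf. \<forall>c. \<Phi> (\<lambda>l. c * \<phi> l) = c * \<Phi> \<phi>)"
proof -
  define A where "A = {q. sublin q \<and> (\<forall>\<phi>. \<phi> \<notin> linf \<longrightarrow> q \<phi> = 0) \<and> (\<forall>\<phi>\<in>linf. q \<phi> \<le> P \<phi>)}"
  define R :: "(('a \<Rightarrow> real) \<Rightarrow> real) \<Rightarrow> (('a \<Rightarrow> real) \<Rightarrow> real) \<Rightarrow> bool"
    where "R a b = (\<forall>\<phi>. b \<phi> \<le> a \<phi>)" for a b
  define P0 where "P0 \<phi> = (if \<phi> \<in> linf then P \<phi> else 0)" for \<phi>
  have sP0: "sublin P0" by (rule sublin_cong[OF sP]) (simp add: P0_def)
  have P0A: "P0 \<in> A" unfolding A_def using sP0 by (simp add: P0_def)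
  have po: "partial_order_on A (relation_of R A)"
    unfolding partial_order_on_def preorder_on_def refl_on_def trans_on_def antisym_on_def relation_of_def R_def
    by (auto intro: order_trans ext) (meson antisym ext)
  have ch: "\<exists>u\<in>A. \<forall>a\<in>C. R a u" if C: "C \<in> Chains (relation_of R A)" for C
  proof -
    have CA: "C \<subseteq> A" using C unfolding Chains_def relation_of_def by blast
    have Ctot: "R a b \<or> R b a" if "a \<in> C" "b \<in> C" for a b
      using C that unfolding Chains_def relation_of_def by blast
    define D where "D = insert P0 C"
    have DA: "D \<subseteq> A" using CA P0A D_def by auto
    have ne: "D \<noteq> {}" using D_def by auto
    have sl: "\<forall>q\<in>D. sublin q" using DA A_def by auto
    have tot: "\<forall>q1\<in>D. \<forall>q2\<in>D. (\<forall>\<phi>\<in>linf. q1 \<phi> \<le> q2 \<phi>) \<or> (\<forall>\<phi>\<in>linf. q2 \<phi> \<le> q1 \<phi>)"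
    proof (intro ballI)
      fix q1 q2 assume q1: "q1 \<in> D" and q2: "q2 \<in> D"
      have leP0: "\<forall>\<phi>\<in>linf. q \<phi> \<le> P0 \<phi>" if "q \<in> D" for q
        using that DA unfolding A_def P0_def by auto
      show "(\<forall>\<phi>\<in>linf. q1 \<phi> \<le> q2 \<phi>) \<or> (\<forall>\<phi>\<in>linf. q2 \<phi> \<le> q1 \<phi>)"
      proof (cases "q1 = P0 \<or> q2 = P0")
        case True then show ?thesis using leP0 q1 q2 by auto
      next
        case False then have "q1 \<in> C" "q2 \<in> C" using q1 q2 D_def by auto
        then show ?thesis using Ctot R_def by blast
      qed
    qed
    note bdd = inf_bdd[OF ne sl tot]
    define u where "u \<phi> = (if \<phi> \<in> linf then (INF q\<in>D. q \<phi>) else 0)" for \<phi>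
    have "sublin u" using sublin_cong[OF inf_sublin[OF ne sl tot], of u] u_def by simp
    moreover have "\<forall>\<phi>\<in>linf. u \<phi> \<le> P \<phi>"
    proof
      fix \<phi> :: "'a \<Rightarrow> real" assume phi: "\<phi> \<in> linf"
      have "(INF q\<in>D. q \<phi>) \<le> P0 \<phi>" using cINF_lower[OF bdd[OF phi], of P0] D_def by simp
      then show "u \<phi> \<le> P \<phi>" using phi u_def P0_def by simp
    qed
    ultimately have uA: "u \<in> A" unfolding A_def using u_def by auto
    have "R a u" if a: "a \<in> C" for a
      unfolding R_def
    proof
      fix \<phi> :: "'a \<Rightarrow> real"
      show "u \<phi> \<le> a \<phi>"
      proof (cases "\<phi> \<in> linf")
        case True
        then show ?thesis using cINF_lower[OF bdd[OF True], of a] a D_def u_def by simp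
      next
        case False
        then show ?thesis using a CA u_def unfolding A_def by auto
      qed
    qed
    then show ?thesis using uA by blast
  qed
  obtain m where mA: "m \<in> A" and mmax: "\<forall>a\<in>A. R m a \<longrightarrow> a = m"
    using predicate_Zorn[OF po ch] by blast
  have sm: "sublin m" and mP: "\<forall>\<phi>\<in>linf. m \<phi> \<le> P \<phi>" using mA A_def by auto
  have minimal: "\<forall>\<phi>\<in>linf. q' \<phi> = m \<phi>" if sq': "sublin q'" and le: "\<forall>\<phi>\<in>linf. q' \<phi> \<le> m \<phi>" for q'
  proof -
    define q'' where "q'' \<phi> = (if \<phi> \<in> linf then q' \<phi> else 0)" for \<phi>
    have "sublin q''" using sublin_cong[OF sq', of q''] q''_def by simp
    moreover have "\<forall>\<phi>\<in>linf. q'' \<phi> \<le> P \<phi>" using le mP q''_def by fastforce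
    ultimately have "q'' \<in> A" unfolding A_def q''_def by auto
    moreover have "R m q''" unfolding R_def q''_def using le mA A_def by auto
    ultimately have "q'' = m" using mmax by blast
    then show ?thesis using q''_def by (metis)
  qed
  have odd: "m (\<lambda>l. - y l) = - m y" if "y \<in> linf" for y
    using min_linear[OF sm minimal that] by blast
  have add: "m (\<lambda>l. \<phi> l + \<psi> l) = m \<phi> + m \<psi>" if phi: "\<phi> \<in> linf" and psi: "\<psi> \<in> linf" for \<phi> \<psi>
  proof -
    have "m (\<lambda>l. (\<phi> l + \<psi> l) + - \<psi> l) \<le> m (\<lambda>l. \<phi> l + \<psi> l) + m (\<lambda>l. - \<psi> l)"
      by (rule sublin_add[OF sm linf_add[OF phi psi] linf_neg[OF psi]])
    moreover have "(\<lambda>l. (\<phi> l + \<psi> l) + - \<psi> l) = \<phi>" by simp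
    ultimately have "m \<phi> + m \<psi> \<le> m (\<lambda>l. \<phi> l + \<psi> l)" using odd[OF psi] by simp
    then show ?thesis using sublin_add[OF sm phi psi] by linarith
  qed
  have smul: "m (\<lambda>l. c * \<phi> l) = c * m \<phi>" if phi: "\<phi> \<in> linf" for \<phi> c
  proof (cases "0 \<le> c")
    case True then show ?thesis using sublin_smul[OF sm phi] by simp
  next
    case False
    define d where "d = - c"
    have d: "0 \<le> d" using False d_def by simp
    have "m (\<lambda>l. - (d * \<phi> l)) = - m (\<lambda>l. d * \<phi> l)" by (rule odd[OF linf_smul[OF phi]])
    moreover have "(\<lambda>l. - (d * \<phi> l)) = (\<lambda>l. c * \<phi> l)" by (simp add: d_def)
    moreover have "m (\<lambda>l. d * \<phi> l) = d * m \<phi>" using sublin_smul[OF sm phi d] .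
    ultimately show ?thesis by (simp add: d_def)
  qed
  show ?thesis using mP add smul by blast
qed


lemma p_upper: "\<phi> \<in> linf \<Longrightarrow> \<phi> l \<le> (SUP l. \<phi> l)"
proof -
  assume "\<phi> \<in> linf"
  then obtain B where "\<forall>l. \<bar>\<phi> l\<bar> \<le> B" by (auto simp: linf_iff)
  then have "bdd_above (range \<phi>)" by (intro bdd_aboveI2[of _ _ B]) (auto simp: abs_le_iff)
  then show ?thesis by (rule cSUP_upper[OF UNIV_I])
qed

lemma p_least: "(\<And>l. \<phi> l \<le> a) \<Longrightarrow> (SUP l. \<phi> l) \<le> (a::real)"
  by (rule cSUP_least) auto

lemma sublin_p: "sublin (\<lambda>\<phi>. SUP l. \<phi> l)"
  unfolding sublin_def
proof (intro conjI ballI allI impI)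
  fix \<phi> \<psi> :: "'a \<Rightarrow> real" assume phi: "\<phi> \<in> linf" and psi: "\<psi> \<in> linf"
  show "(SUP l. \<phi> l + \<psi> l) \<le> (SUP l. \<phi> l) + (SUP l. \<psi> l)"
    using p_upper[OF phi] p_upper[OF psi] by (intro p_least add_mono)
next
  fix \<phi> :: "'a \<Rightarrow> real" and c :: real assume phi: "\<phi> \<in> linf" and c: "0 \<le> c"
  show "(SUP l. c * \<phi> l) = c * (SUP l. \<phi> l)"
  proof (cases "c = 0")
    case True then show ?thesis by simp
  next
    case False
    then have cp: "0 < c" using c by simp
    have "(SUP l. c * \<phi> l) \<le> c * (SUP l. \<phi> l)"
      using p_upper[OF phi] cp by (intro p_least) simp
    moreover have "(SUP l. \<phi> l) \<le> (SUP l. c * \<phi> l) / c"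
    proof (intro p_least)
      fix l
      have "c * \<phi> l \<le> (SUP l. c * \<phi> l)" using p_upper[OF linf_smul[OF phi]] .
      then show "\<phi> l \<le> (SUP l. c * \<phi> l) / c" using cp by (simp add: le_divide_eq mult.commute)
    qed
    ultimately show ?thesis using cp by (simp add: le_divide_eq mult.commute)
  qed
qed

lemma linf_sum: "finite S \<Longrightarrow> (\<And>j. j \<in> S \<Longrightarrow> h j \<in> linf) \<Longrightarrow> (\<lambda>l. \<Sum>j\<in>S. h j l) \<in> linf"
proof (induction S rule: finite_induct)
  case empty then show ?case using linf_const[of 0] by simp
next
  case (insert a S)
  then show ?case using linf_add[of "h a" "\<lambda>l. \<Sum>j\<in>S. h j l"] by simp
qed

definition kcone :: "('l \<Rightarrow> 'x \<Rightarrow> real) \<Rightarrow> ('l \<Rightarrow> real) set" where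
  "kcone g = {k. \<exists>(m::nat) c xs. (\<forall>j<m. 0 \<le> c j) \<and> k = (\<lambda>l. \<Sum>j<m. c j * g l (xs j))}"

lemma cone_linf: fixes g :: "'l \<Rightarrow> 'x \<Rightarrow> real"
  assumes bd: "\<And>x. (\<lambda>l. g l x) \<in> linf" and k: "k \<in> kcone g" shows "k \<in> linf"
proof -
  obtain m :: nat and c :: "nat \<Rightarrow> real" and xs :: "nat \<Rightarrow> 'x"
    where kdef: "k = (\<lambda>l. \<Sum>j<m. c j * g l (xs j))"
    using k unfolding kcone_def by blast
  show ?thesis unfolding kdef
    by (rule linf_sum[of "{..<m}" "\<lambda>j l. c j * g l (xs j)", simplified]) (rule linf_smul[OF bd])
qed

lemma kconeI: "\<forall>j<(m::nat). 0 \<le> c j \<Longrightarrow> k = (\<lambda>l. \<Sum>j<m. c j * g l (xs j)) \<Longrightarrow> k \<in> kcone g"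
  unfolding kcone_def by blast

lemma cone_0: "(\<lambda>l. 0) \<in> kcone g"
  unfolding kcone_def by (rule CollectI, rule exI[of _ "0::nat"], rule exI[of _ "\<lambda>_. 0::real"], rule exI[of _ "\<lambda>_. undefined"]) simp

lemma cone_gen: "(\<lambda>l. g l x) \<in> kcone g"
  unfolding kcone_def by (rule CollectI, rule exI[of _ "1::nat"], rule exI[of _ "\<lambda>_. 1::real"], rule exI[of _ "\<lambda>_. x"]) simp

lemma cone_smul: fixes g :: "'l \<Rightarrow> 'x \<Rightarrow> real"
  assumes "k \<in> kcone g" "0 \<le> a" shows "(\<lambda>l. a * k l) \<in> kcone g"
proof -
  obtain m :: nat and c :: "nat \<Rightarrow> real" and xs :: "nat \<Rightarrow> 'x"
    where c: "\<forall>j<m. 0 \<le> c j" and k: "k = (\<lambda>l. \<Sum>j<m. c j * g l (xs j))"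
    using assms(1) unfolding kcone_def by blast
  have "(\<lambda>l. a * k l) = (\<lambda>l. \<Sum>j<m. (a * c j) * g l (xs j))"
    unfolding k by (simp add: sum_distrib_left mult.assoc)
  moreover have "\<forall>j<m. 0 \<le> a * c j" using c assms(2) by simp
  ultimately show ?thesis by (rule kconeI[rotated])
qed

lemma sum_concat: "(\<Sum>j<m1+(m2::nat). f j) = (\<Sum>j<m1. f j) + (\<Sum>j<m2. f (m1 + j))"
  by (induction m2) (auto simp: add.assoc)

lemma cone_add: fixes g :: "'l \<Rightarrow> 'x \<Rightarrow> real"
  assumes "k1 \<in> kcone g" "k2 \<in> kcone g" shows "(\<lambda>l. k1 l + k2 l) \<in> kcone g"
proof -
  obtain m1 :: nat and c1 :: "nat \<Rightarrow> real" and xs1 :: "nat \<Rightarrow> 'x"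
    where c1: "\<forall>j<m1. 0 \<le> c1 j" and k1: "k1 = (\<lambda>l. \<Sum>j<m1. c1 j * g l (xs1 j))"
    using assms(1) unfolding kcone_def by blast
  obtain m2 :: nat and c2 :: "nat \<Rightarrow> real" and xs2 :: "nat \<Rightarrow> 'x"
    where c2: "\<forall>j<m2. 0 \<le> c2 j" and k2: "k2 = (\<lambda>l. \<Sum>j<m2. c2 j * g l (xs2 j))"
    using assms(2) unfolding kcone_def by blast
  define c where "c j = (if j < m1 then c1 j else c2 (j - m1))" for j
  define xs where "xs j = (if j < m1 then xs1 j else xs2 (j - m1))" for j
  have "(\<lambda>l. k1 l + k2 l) = (\<lambda>l. \<Sum>j<m1+m2. c j * g l (xs j))"
    unfolding k1 k2 sum_concat c_def xs_def by simp
  moreover have "\<forall>j<m1+m2. 0 \<le> c j" using c1 c2 by (simp add: c_def)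
  ultimately show ?thesis by (rule kconeI[rotated])
qed

lemma cone_nonneg: fixes g :: "'l \<Rightarrow> 'x \<Rightarrow> real"
  assumes conv: "infsup_convex g" and bd: "\<And>x. (\<lambda>l. g l x) \<in> linf"
    and h0: "\<And>x. 0 \<le> (SUP l. ereal (g l x))"
    and k: "k \<in> kcone g"
  shows "0 \<le> (SUP l. k l)"
proof -
  obtain m :: nat and c :: "nat \<Rightarrow> real" and xs :: "nat \<Rightarrow> 'x"
    where c: "\<forall>j<m. 0 \<le> c j" and kdef: "k = (\<lambda>l. \<Sum>j<m. c j * g l (xs j))"
    using k unfolding kcone_def by blast
  define s where "s = (\<Sum>j<m. c j)"
  have s0: "0 \<le> s" unfolding s_def using c by (intro sum_nonneg) auto
  show ?thesis
  proof (cases "s = 0")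
    case True
    then have "\<forall>j\<in>{..<m}. c j = 0" using sum_nonneg_eq_0_iff[of "{..<m}" c] c unfolding s_def by simp
    then have "k = (\<lambda>l. 0)" unfolding kdef by simp
    then show ?thesis by simp
  next
    case False
    then have sp: "0 < s" using s0 by simp
    have m1: "m \<ge> 1" using False unfolding s_def by (cases m) auto
    define t where "t j = c j / s" for j
    have t1: "\<forall>j<m. 0 \<le> t j" unfolding t_def using c sp by simp
    have t2: "(\<Sum>j<m. t j) = 1" unfolding t_def sum_divide_distrib[symmetric] s_def[symmetric] using sp by simp
    have tS: "t \<in> std_simplex m" unfolding std_simplex_def using t1 t2 by blast
    have cv: "\<forall>m\<ge>1. \<forall>t\<in>std_simplex m. \<forall>xs :: nat \<Rightarrow> 'x.
        (INF x. SUP l. ereal (g l x)) \<le> (SUP l. ereal (\<Sum>j<m. t j * g l (xs j)))"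
      using conv unfolding infsup_convex_def .
    have ineq: "(INF x. SUP l. ereal (g l x)) \<le> (SUP l. ereal (\<Sum>j<m. t j * g l (xs j)))"
      using cv[rule_format, OF m1 tS] .
    have "0 \<le> (INF x. SUP l. ereal (g l x))" using h0 by (intro INF_greatest) auto
    then have pos: "0 \<le> (SUP l. ereal (\<Sum>j<m. t j * g l (xs j)))" using ineq by (rule order_trans)
    show ?thesis
    proof (rule ccontr)
      assume "\<not> 0 \<le> (SUP l. k l)"
      then have neg: "(SUP l. k l) < 0" by simp
      have "ereal (\<Sum>j<m. t j * g l (xs j)) \<le> ereal ((SUP l. k l) / s)" for l
      proof -
        have "(\<Sum>j<m. t j * g l (xs j)) = k l / s"
          unfolding kdef t_def sum_divide_distrib by (rule sum.cong) auto
        moreover have "k l \<le> (SUP l. k l)" using p_upper[OF cone_linf[OF bd k]] .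
        ultimately show ?thesis using divide_right_mono[of "k l" "SUP l. k l" s] sp by simp
      qed
      then have "(SUP l. ereal (\<Sum>j<m. t j * g l (xs j))) \<le> ereal ((SUP l. k l) / s)"
        by (intro SUP_least)
      moreover have "(SUP l. k l) / s < 0" using neg sp by (simp add: divide_neg_pos)
      ultimately have "(SUP l. ereal (\<Sum>j<m. t j * g l (xs j))) < 0" by (simp add: le_less_trans)
      then show False using pos by simp
    qed
  qed
qed

lemma linf_abs: "\<phi> \<in> linf \<Longrightarrow> (\<lambda>l. \<bar>\<phi> l\<bar>) \<in> linf"
  by (simp add: linf_iff)

lemma sublin_P: fixes g :: "'l \<Rightarrow> 'x \<Rightarrow> real"
  assumes conv: "infsup_convex g" and bd: "\<And>x. (\<lambda>l. g l x) \<in> linf"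
    and h0: "\<And>x. 0 \<le> (SUP l. ereal (g l x))"
  shows "sublin (\<lambda>\<phi>. INF k\<in>kcone g. (SUP l. \<phi> l + k l))"
proof -
  have ne: "kcone g \<noteq> {}" using cone_0 by blast
  have kl: "k \<in> linf" if "k \<in> kcone g" for k using cone_linf[OF bd that] .
  have kpos: "0 \<le> (SUP l. k l)" if "k \<in> kcone g" for k using cone_nonneg[OF conv bd h0 that] .
  have bdd: "bdd_below ((\<lambda>k. SUP l. \<phi> l + k l) ` kcone g)" if phi: "\<phi> \<in> linf" for \<phi>
  proof (intro bdd_belowI2)
    fix k assume k: "k \<in> kcone g"
    have "(SUP l. (\<phi> l + k l) + - \<phi> l) \<le> (SUP l. \<phi> l + k l) + (SUP l. - \<phi> l)"
      by (rule sublin_add[OF sublin_p linf_add[OF phi kl[OF k]] linf_neg[OF phi]])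
    moreover have "(\<lambda>l. (\<phi> l + k l) + - \<phi> l) = k" by (rule ext) simp
    ultimately show "- (SUP l. - \<phi> l) \<le> (SUP l. \<phi> l + k l)" using kpos[OF k] by simp
  qed
  show ?thesis unfolding sublin_def
  proof (intro conjI ballI allI impI)
    fix \<phi> \<psi> :: "'l \<Rightarrow> real" assume phi: "\<phi> \<in> linf" and psi: "\<psi> \<in> linf"
    have s: "(\<lambda>l. \<phi> l + \<psi> l) \<in> linf" using linf_add[OF phi psi] .
    have key: "(INF k\<in>kcone g. (SUP l. (\<phi> l + \<psi> l) + k l)) \<le> (SUP l. \<phi> l + k1 l) + (SUP l. \<psi> l + k2 l)"
      if k1: "k1 \<in> kcone g" and k2: "k2 \<in> kcone g" for k1 k2
    proof -
      have k12: "(\<lambda>l. k1 l + k2 l) \<in> kcone g" using cone_add[OF k1 k2] .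
      have "(INF k\<in>kcone g. (SUP l. (\<phi> l + \<psi> l) + k l)) \<le> (SUP l. (\<phi> l + \<psi> l) + (k1 l + k2 l))"
        using cINF_lower[OF bdd[OF s] k12] by simp
      also have "(\<lambda>l. (\<phi> l + \<psi> l) + (k1 l + k2 l)) = (\<lambda>l. (\<phi> l + k1 l) + (\<psi> l + k2 l))"
        by (simp add: algebra_simps)
      also have "(SUP l. (\<phi> l + k1 l) + (\<psi> l + k2 l)) \<le> (SUP l. \<phi> l + k1 l) + (SUP l. \<psi> l + k2 l)"
        by (rule sublin_add[OF sublin_p linf_add[OF phi kl[OF k1]] linf_add[OF psi kl[OF k2]]])
      finally show ?thesis .
    qed
    have "(INF k\<in>kcone g. (SUP l. (\<phi> l + \<psi> l) + k l)) - (SUP l. \<psi> l + k2 l) \<le> (INF k\<in>kcone g. (SUP l. \<phi> l + k l))"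
      if k2: "k2 \<in> kcone g" for k2
    proof (intro cINF_greatest[OF ne])
      fix k assume k: "k \<in> kcone g"
      show "(INF k\<in>kcone g. (SUP l. (\<phi> l + \<psi> l) + k l)) - (SUP l. \<psi> l + k2 l) \<le> (SUP l. \<phi> l + k l)"
        using key[OF k k2] by linarith
    qed
    then have "(INF k\<in>kcone g. (SUP l. (\<phi> l + \<psi> l) + k l)) - (INF k\<in>kcone g. (SUP l. \<phi> l + k l)) \<le> (INF k\<in>kcone g. (SUP l. \<psi> l + k l))"
      by (intro cINF_greatest[OF ne]) (simp add: le_diff_eq diff_le_eq add.commute)
    then show "(INF k\<in>kcone g. (SUP l. (\<phi> l + \<psi> l) + k l)) \<le> (INF k\<in>kcone g. (SUP l. \<phi> l + k l)) + (INF k\<in>kcone g. (SUP l. \<psi> l + k l))"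
      by simp
  next
    fix \<phi> :: "'l \<Rightarrow> real" and c :: real assume phi: "\<phi> \<in> linf" and c: "0 \<le> c"
    have s: "(\<lambda>l. c * \<phi> l) \<in> linf" using linf_smul[OF phi] .
    show "(INF k\<in>kcone g. (SUP l. c * \<phi> l + k l)) = c * (INF k\<in>kcone g. (SUP l. \<phi> l + k l))"
    proof (cases "c = 0")
      case True
      have "(INF k\<in>kcone g. (SUP l. k l)) \<le> (SUP l. (\<lambda>l. 0) l)"
        using cINF_lower[OF bdd[OF linf_const[of 0]] cone_0] by simp
      moreover have "0 \<le> (INF k\<in>kcone g. (SUP l. k l))" using kpos by (intro cINF_greatest[OF ne])
      ultimately show ?thesis using True by simp
    next
      case False
      then have cp: "0 < c" using c by simp
      have "(INF k\<in>kcone g. (SUP l. c * \<phi> l + k l)) / c \<le> (INF k\<in>kcone g. (SUP l. \<phi> l + k l))"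
      proof (intro cINF_greatest[OF ne])
        fix k assume k: "k \<in> kcone g"
        have ck: "(\<lambda>l. c * k l) \<in> kcone g" using cone_smul[OF k c] .
        have "(INF k\<in>kcone g. (SUP l. c * \<phi> l + k l)) \<le> (SUP l. c * \<phi> l + c * k l)"
          using cINF_lower[OF bdd[OF s] ck] by simp
        also have "(\<lambda>l. c * \<phi> l + c * k l) = (\<lambda>l. c * (\<phi> l + k l))" by (simp add: algebra_simps)
        also have "(SUP l. c * (\<phi> l + k l)) = c * (SUP l. \<phi> l + k l)"
          by (rule sublin_smul[OF sublin_p linf_add[OF phi kl[OF k]] c])
        finally show "(INF k\<in>kcone g. (SUP l. c * \<phi> l + k l)) / c \<le> (SUP l. \<phi> l + k l)"
          using cp by (simp add: divide_le_eq mult.commute)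
      qed
      moreover have "c * (INF k\<in>kcone g. (SUP l. \<phi> l + k l)) \<le> (INF k\<in>kcone g. (SUP l. c * \<phi> l + k l))"
      proof (intro cINF_greatest[OF ne])
        fix k assume k: "k \<in> kcone g"
        have ck: "(\<lambda>l. (1 / c) * k l) \<in> kcone g" by (rule cone_smul[OF k]) (use cp in simp)
        have "(INF k\<in>kcone g. (SUP l. \<phi> l + k l)) \<le> (SUP l. \<phi> l + (1 / c) * k l)"
          using cINF_lower[OF bdd[OF phi] ck] by simp
        then have "c * (INF k\<in>kcone g. (SUP l. \<phi> l + k l)) \<le> c * (SUP l. \<phi> l + (1 / c) * k l)"
          using cp by simp
        also have "\<dots> = (SUP l. c * (\<phi> l + (1 / c) * k l))"
          by (rule sublin_smul[OF sublin_p linf_add[OF phi linf_smul[OF kl[OF k]]] c, symmetric])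
        also have "(\<lambda>l. c * (\<phi> l + (1 / c) * k l)) = (\<lambda>l. c * \<phi> l + k l)" using cp by (simp add: algebra_simps)
        finally show "c * (INF k\<in>kcone g. (SUP l. \<phi> l + k l)) \<le> (SUP l. c * \<phi> l + k l)" .
      qed
      ultimately show ?thesis using cp by (simp add: divide_le_eq mult.commute)
    qed
  qed
qed

theorem theorem3p1:
  fixes f :: "'x \<Rightarrow> real" and F :: "'l \<Rightarrow> 'x \<Rightarrow> real"
  assumes "infsup_convex (\<lambda>l x. F l x - f x)"
    and "\<And>x. (\<lambda>l. F l x) \<in> linf"
    and "\<And>x. f x \<le> (SUP l. F l x)"
  shows "\<exists>\<Phi>\<in>Delta_L. \<forall>x. f x \<le> \<Phi> (\<lambda>l. F l x)"
proof -
  define g where "g = (\<lambda>l x. F l x - f x)"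
  have conv: "infsup_convex g" using assms(1) unfolding g_def .
  have bd: "(\<lambda>l. g l x) \<in> linf" for x
    using linf_add[OF assms(2) linf_const[of "- f x"]] unfolding g_def by simp
  have h0: "0 \<le> (SUP l. ereal (g l x))" for x
  proof (rule ccontr)
    assume "\<not> 0 \<le> (SUP l. ereal (g l x))"
    then have "(SUP l. ereal (g l x)) < 0" by simp
    then obtain z where z1: "(SUP l. ereal (g l x)) < ereal z" and z2: "ereal z < 0"
      using ereal_dense2 by blast
    have "F l x \<le> f x + z" for l
    proof -
      have "ereal (g l x) \<le> (SUP l. ereal (g l x))" by (rule SUP_upper) simp
      then have "ereal (g l x) < ereal z" using z1 by (rule le_less_trans)
      then show ?thesis unfolding g_def by simp
    qed
    then have "(SUP l. F l x) \<le> f x + z" by (rule p_least)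
    moreover have "z < 0" using z2 by simp
    ultimately show False using assms(3)[of x] by linarith
  qed
  define P where "P \<phi> = (INF k\<in>kcone g. (SUP l. \<phi> l + k l))" for \<phi> :: "'l \<Rightarrow> real"
  have sP: "sublin P" unfolding P_def by (rule sublin_P[OF conv bd h0])
  obtain \<Phi> where \<Phi>P: "\<forall>\<phi>\<in>linf. \<Phi> \<phi> \<le> P \<phi>"
    and add: "\<forall>\<phi>\<in>linf. \<forall>\<psi>\<in>linf. \<Phi> (\<lambda>l. \<phi> l + \<psi> l) = \<Phi> \<phi> + \<Phi> \<psi>"
    and smul: "\<forall>\<phi>\<in>linf. \<forall>c. \<Phi> (\<lambda>l. c * \<phi> l) = c * \<Phi> \<phi>"
    using exists_linear_below[OF sP] by blast
  have kl: "k \<in> linf" if "k \<in> kcone g" for k using cone_linf[OF bd that] .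
  have kpos: "0 \<le> (SUP l. k l)" if "k \<in> kcone g" for k using cone_nonneg[OF conv bd h0 that] .
  have Pk: "P \<phi> \<le> (SUP l. \<phi> l + k l)" if phi: "\<phi> \<in> linf" and k: "k \<in> kcone g" for \<phi> k
  proof -
    have "bdd_below ((\<lambda>k. SUP l. \<phi> l + k l) ` kcone g)"
    proof (intro bdd_belowI2)
      fix k assume k: "k \<in> kcone g"
      have "(SUP l. (\<phi> l + k l) + - \<phi> l) \<le> (SUP l. \<phi> l + k l) + (SUP l. - \<phi> l)"
        by (rule sublin_add[OF sublin_p linf_add[OF phi kl[OF k]] linf_neg[OF phi]])
      moreover have "(\<lambda>l. (\<phi> l + k l) + - \<phi> l) = k" by (rule ext) simp
      ultimately show "- (SUP l. - \<phi> l) \<le> (SUP l. \<phi> l + k l)" using kpos[OF k] by simp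
    qed
    then show ?thesis unfolding P_def by (rule cINF_lower[OF _ k])
  qed
  have \<Phi>p: "\<Phi> \<phi> \<le> (SUP l. \<phi> l)" if phi: "\<phi> \<in> linf" for \<phi>
  proof -
    have "\<Phi> \<phi> \<le> P \<phi>" using \<Phi>P phi by blast
    also have "\<dots> \<le> (SUP l. \<phi> l + 0)" using Pk[OF phi cone_0] by simp
    finally show ?thesis by simp
  qed
  have neg: "\<Phi> (\<lambda>l. - \<phi> l) = - \<Phi> \<phi>" if phi: "\<phi> \<in> linf" for \<phi>
    using smul[rule_format, OF phi, of "-1"] by simp
  have one: "\<Phi> (\<lambda>l. 1) = 1"
  proof -
    have "\<Phi> (\<lambda>l. 1) \<le> 1" using \<Phi>p[OF linf_const[of 1]] by simp
    moreover have "\<Phi> (\<lambda>l. - 1) \<le> - 1" using \<Phi>p[OF linf_const[of "-1"]] by simp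
    moreover have "\<Phi> (\<lambda>l. - 1) = - \<Phi> (\<lambda>l. 1)" using neg[OF linf_const[of 1]] by simp
    ultimately show ?thesis by linarith
  qed
  have main: "f x \<le> \<Phi> (\<lambda>l. F l x)" for x
  proof -
    have gx: "(\<lambda>l. g l x) \<in> kcone g" by (rule cone_gen)
    have "\<Phi> (\<lambda>l. - g l x) \<le> P (\<lambda>l. - g l x)" using \<Phi>P[rule_format, OF linf_neg[OF bd]] .
    also have "\<dots> \<le> (SUP l. - g l x + g l x)" by (rule Pk[OF linf_neg[OF bd] gx])
    also have "\<dots> = 0" by simp
    finally have "0 \<le> \<Phi> (\<lambda>l. g l x)" using neg[OF bd] by simp
    moreover have "\<Phi> (\<lambda>l. g l x) = \<Phi> (\<lambda>l. F l x) + (- f x) * \<Phi> (\<lambda>l. 1)"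
    proof -
      have "(\<lambda>l. g l x) = (\<lambda>l. F l x + (\<lambda>l. (- f x) * 1) l)" unfolding g_def by simp
      then have "\<Phi> (\<lambda>l. g l x) = \<Phi> (\<lambda>l. F l x) + \<Phi> (\<lambda>l. (- f x) * 1)"
        using add[rule_format, OF assms(2) linf_const[of "(- f x) * 1"]] by simp
      also have "\<Phi> (\<lambda>l. (- f x) * 1) = (- f x) * \<Phi> (\<lambda>l. 1)"
        by (rule smul[rule_format, OF linf_const[of 1]])
      finally show ?thesis .
    qed
    ultimately show ?thesis using one by simp
  qed
  have "\<Phi> \<in> Delta_L"
    unfolding Delta_L_def linf_dual_def
  proof (intro CollectI conjI ballI allI exI[of _ 1])
    fix \<phi> \<psi> :: "'l \<Rightarrow> real" and a b :: real assume phi: "\<phi> \<in> linf" and psi: "\<psi> \<in> linf"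
    have "\<Phi> (\<lambda>l. a * \<phi> l + b * \<psi> l) = \<Phi> (\<lambda>l. a * \<phi> l) + \<Phi> (\<lambda>l. b * \<psi> l)"
      by (rule add[rule_format, OF linf_smul[OF phi] linf_smul[OF psi]])
    then show "\<Phi> (\<lambda>l. a * \<phi> l + b * \<psi> l) = a * \<Phi> \<phi> + b * \<Phi> \<psi>" using smul[rule_format, OF phi] smul[rule_format, OF psi] by simp
  next
    fix \<phi> :: "'l \<Rightarrow> real" assume phi: "\<phi> \<in> linf"
    have up: "\<phi> l \<le> (SUP l. \<bar>\<phi> l\<bar>)" "- \<phi> l \<le> (SUP l. \<bar>\<phi> l\<bar>)" for l
      using p_upper[OF linf_abs[OF phi], of l] by auto
    have "\<Phi> \<phi> \<le> (SUP l. \<bar>\<phi> l\<bar>)" using \<Phi>p[OF phi] p_least[of \<phi>, OF up(1)] by linarith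
    moreover have "- \<Phi> \<phi> \<le> (SUP l. \<bar>\<phi> l\<bar>)"
      using \<Phi>p[OF linf_neg[OF phi]] neg[OF phi] p_least[of "\<lambda>l. - \<phi> l", OF up(2)] by linarith
    ultimately show "\<bar>\<Phi> \<phi>\<bar> \<le> 1 * (SUP l. \<bar>\<phi> l\<bar>)" by simp
  next
    fix \<phi> :: "'l \<Rightarrow> real" assume phi: "\<phi> \<in> linf"
    show "\<Phi> \<phi> \<le> (SUP l. \<phi> l)" using \<Phi>p[OF phi] .
  qed
  then show ?thesis using main by blast
qed

end
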